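(* Let $N\ge2$, $\rho\in[0,1)$, $f<0$, $g<0$, and $\nu\in i\mathbb{R}$. Suppose the leader moves as $z_0(t)=e^{\nu t}$, so that $\Gamma_0(t)=g_0(\nu)e^{\nu t}$ with $g_0(\nu)=-(1-\rho)(f+g\nu)e_2$. Then $\nu$ is not an eigenvalue of $M$, and every solution $z(t)$ of $\dot z=Mz+\Gamma_0(t)$ satisfies $z(t)-a(\nu)e^{\nu t}\to0$ as $t\to\infty$, where $a(\nu)=-(M-\nu I)^{-1}g_0(\nu)$. In particular $z_k(t)-a_k(\nu)e^{\nu t}\to0$ for each $1\le k\le N$, where $a_k(\nu)$ is the $(2k-1)$-th entry of $a(\nu)$.
   Context: Model: agents $0,\dots,N$ on the line with deviations $z_k(t)$; leader trajectory $z_0$ prescribed; for $1\le i\le N-1$, $\ddot z_i=f\{z_i-(1-\rho)z_{i-1}-\rho z_{i+1}\}+g\{\dot z_i-(1-\rho)\dot z_{i-1}-\rho\dot z_{i+1}\}$, and $\ddot z_N=f\{z_N-z_{N-1}\}+g\{\dot z_N-\dot z_{N-1}\}$. In first-order form with $z=(z_1,\dot z_1,\dots,z_N,\dot z_N)^T\in\mathbb{C}^{2N}$: $\dot z=Mz+\Gamma_0(t)$, $M=I_N\otimes A+P\otimes K$, $A=\begin{pmatrix}0&1\\0&0\end{pmatrix}$, $K=\begin{pmatrix}0&0\\ f&g\end{pmatrix}$, $P=I_N-Q_\rho$ with $Q_\rho$ the $N\times N$ matrix with zero diagonal, $(Q_\rho)_{i,i+1}=\rho$ ($1\le i\le N-1$),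 $(Q_\rho)_{i,i-1}=1-\rho$ ($2\le i\le N-1$), $(Q_\rho)_{N,N-1}=1$, other entries $0$; $\Gamma_0(t)=-(1-\rho)(fz_0(t)+g\dot z_0(t))e_2$, $e_2$ the second standard basis vector of $\mathbb{C}^{2N}$. *)

theory Defs
  imports "HOL-Analysis.Analysis" "Jordan_Normal_Form.Char_Poly" "Jordan_Normal_Form.Gauss_Jordan_Elimination"
begin

definition kron :: "'a::times mat \<Rightarrow> 'a mat \<Rightarrow> 'a mat" where
  "kron X Y = mat (dim_row X * dim_row Y) (dim_col X * dim_col Y)
     (\<lambda>(i,j). X $$ (i div dim_row Y, j div dim_col Y) * Y $$ (i mod dim_row Y, j mod dim_col Y))"

definition Amat :: "complex mat" where
  "Amat = mat_of_rows_list 2 [[0,1],[0,0]]"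

definition Kmat :: "complex \<Rightarrow> complex \<Rightarrow> complex mat" where
  "Kmat f g = mat_of_rows_list 2 [[0,0],[f,g]]"

(* Q_rho, 0-indexed: rows/cols 0..N-1 correspond to agents 1..N *)
definition Qmat :: "nat \<Rightarrow> real \<Rightarrow> complex mat" where
  "Qmat N \<rho> = mat N N (\<lambda>(i,j).
     if i + 1 < N \<and> j = i + 1 then complex_of_real \<rho>
     else if 1 \<le> i \<and> i + 1 < N \<and> j + 1 = i then complex_of_real (1 - \<rho>)
     else if i + 1 = N \<and> j + 2 = N then 1
     else 0)"

definition Pmat :: "nat \<Rightarrow> real \<Rightarrow> complex mat" where
  "Pmat N \<rho> = 1\<^sub>m N - Qmat N \<rho>"

definition Mmat :: "nat \<Rightarrow> real \<Rightarrow> complex \<Rightarrow> complex \<Rightarrow> complex mat" where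
  "Mmat N \<rho> f g = kron (1\<^sub>m N) Amat + kron (Pmat N \<rho>) (Kmat f g)"

(* g_0(nu) = -(1-rho)(f + g nu) e_2; e_2 is index 1 (0-indexed) *)
definition g0vec :: "nat \<Rightarrow> real \<Rightarrow> complex \<Rightarrow> complex \<Rightarrow> complex \<Rightarrow> complex vec" where
  "g0vec N \<rho> f g \<nu> = (- (complex_of_real (1 - \<rho>) * (f + g * \<nu>))) \<cdot>\<^sub>v unit_vec (2*N) 1"

definition avec :: "nat \<Rightarrow> real \<Rightarrow> complex \<Rightarrow> complex \<Rightarrow> complex \<Rightarrow> complex vec" where
  "avec N \<rho> f g \<nu> = - (the (mat_inverse (Mmat N \<rho> f g - \<nu> \<cdot>\<^sub>m 1\<^sub>m (2*N))) *\<^sub>v g0vec N \<rho> f g \<nu>)"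

end

theory Submission
  imports Defs "Jordan_Normal_Form.Schur_Decomposition"
begin


lemma scalar_decay:
  fixes y h :: "real \<Rightarrow> complex" and l :: complex
  assumes der: "\<And>t. t \<ge> t0 \<Longrightarrow> (y has_vector_derivative (l * y t + h t)) (at t within {t0..})"
  and neg: "Re l < 0" and h: "(h \<longlongrightarrow> 0) at_top"
  shows "(y \<longlongrightarrow> 0) at_top"
proof (rule tendstoI)
  fix e :: real assume e: "e > 0"
  define a where "a = - Re l"
  have a: "a > 0" using neg a_def by simp
  define d where "d = a * e / 4"
  have d: "d > 0" unfolding d_def using a e by simp
  from tendstoD[OF h d] obtain T0 where T0: "\<And>t. t \<ge> T0 \<Longrightarrow> norm (h t) < d"
    by (auto simp: eventually_at_top_linorder)
  define T where "T = max T0 (t0 + 1)"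
  have derat: "(y has_vector_derivative (l * y t + h t)) (at t)" if "t > t0" for t
  proof -
    have "t \<in> interior {t0..}" using that by simp
    then show ?thesis using der[of t] that at_within_interior by fastforce
  qed
  have cont: "continuous_on {T..t} y" for t
  proof -
    have "continuous (at s) y" if "s \<in> {T..t}" for s
      using derat[of s] that T_def has_vector_derivative_continuous by force
    then show ?thesis by (simp add: continuous_at_imp_continuous_on)
  qed
  have bound: "norm (y t) \<le> exp (- a * (t - T)) * norm (y T) + d / a" if t: "t > T" for t
  proof -
    define phi where "phi s = exp (- l * (complex_of_real s - complex_of_real T)) * y s" for s
    define phi' where "phi' s = exp (- l * (complex_of_real s - complex_of_real T)) * h s" for s
    define Phi where "Phi s = d / a * exp (a * (s - T))" for s
    have "norm (phi t - phi T) \<le> Phi t - Phi T"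
    proof (rule differentiable_bound_general[where f' = phi' and \<phi>' = "\<lambda>s. d * exp (a * (s - T))"])
      show "T < t" by fact
      show "continuous_on {T..t} phi" unfolding phi_def
        by (intro continuous_intros cont)
      show "continuous_on {T..t} Phi" unfolding Phi_def
        by (intro continuous_intros)
      fix s assume s: "T < s" "s < t"
      have "s > t0" using s T_def by simp
      from derat[OF this] have dy: "(y has_vector_derivative (l * y s + h s)) (at s)" .
      have de: "((\<lambda>s. exp (- l * (complex_of_real s - complex_of_real T))) has_vector_derivative (- l * exp (- l * (complex_of_real s - complex_of_real T)))) (at s)"
        by (rule has_vector_derivative_real_field) (auto intro!: derivative_eq_intros)
      show "(phi has_vector_derivative phi' s) (at s)"
        using has_vector_derivative_mult[OF de dy] unfolding phi_def phi'_def by (simp add: algebra_simps)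
      show "(Phi has_vector_derivative d * exp (a * (s - T))) (at s)"
        unfolding Phi_def using a
        by (auto intro!: derivative_eq_intros simp: has_real_derivative_iff_has_vector_derivative[symmetric])
      have "norm (phi' s) = exp (a * (s - T)) * norm (h s)"
        unfolding phi'_def a_def by (simp add: norm_mult norm_exp_eq_Re)
      also have "\<dots> \<le> exp (a * (s - T)) * d"
        using T0[of s] s T_def by (intro mult_left_mono) auto
      finally show "norm (phi' s) \<le> d * exp (a * (s - T))" by (simp add: mult.commute)
    qed
    also have "\<dots> \<le> Phi t" unfolding Phi_def using a d by simp
    finally have 0: "norm (phi t - phi T) \<le> Phi t" .
    have "norm (phi t) \<le> norm (phi T) + norm (phi t - phi T)" by (rule norm_triangle_sub)
    moreover have "phi T = y T" unfolding phi_def by simp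
    ultimately have 1: "norm (phi t) \<le> norm (y T) + Phi t" using 0 by simp  
    have "y t = exp (l * (complex_of_real t - complex_of_real T)) * phi t"
      unfolding phi_def by (simp add: exp_minus_inverse mult.assoc[symmetric] exp_add[symmetric])
    then have "norm (y t) = exp (- a * (t - T)) * norm (phi t)"
      unfolding a_def by (simp add: norm_mult norm_exp_eq_Re)
    also have "\<dots> \<le> exp (- a * (t - T)) * (norm (y T) + Phi t)"
      using 1 by (intro mult_left_mono) auto
    also have "\<dots> = exp (- a * (t - T)) * norm (y T) + d / a"
      unfolding Phi_def using a by (simp add: algebra_simps exp_add[symmetric])
    finally show ?thesis .
  qed
  have lim: "((\<lambda>t. exp (- a * (t - T)) * norm (y T)) \<longlongrightarrow> 0) at_top"
    using a by real_asymp
  from tendstoD[OF lim, of "e/2"] e obtain T1 where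
    T1: "\<And>t. t \<ge> T1 \<Longrightarrow> exp (- a * (t - T)) * norm (y T) < e / 2"
    by (auto simp: eventually_at_top_linorder)
  show "\<forall>\<^sub>F t in at_top. dist (y t) 0 < e"
    unfolding eventually_at_top_linorder
  proof (intro exI[of _ "max T1 (T + 1)"] allI impI)
    fix t assume "t \<ge> max T1 (T + 1)"
    then have "norm (y t) \<le> exp (- a * (t - T)) * norm (y T) + d / a" "exp (- a * (t - T)) * norm (y T) < e / 2"
      using bound T1 by auto
    moreover have "d / a = e / 4" unfolding d_def using a by simp
    ultimately show "dist (y t) 0 < e" using e by simp
  qed
qed
lemma diag_eigen:
  fixes M :: "complex mat"
  assumes M: "M \<in> carrier_mat n n" and cp: "char_poly M = (\<Prod>a\<leftarrow>es. [:- a, 1:])" and e: "e \<in> set es"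
  shows "eigenvalue M e"
proof -
  have "poly (char_poly M) e = 0" unfolding cp using e
    by (induct es) auto
  then show ?thesis using eigenvalue_root_char_poly[OF M] by simp
qed

lemma mv_sum:
  assumes "A \<in> carrier_mat n m" "v \<in> carrier_vec m" "k < n"
  shows "(A *\<^sub>v v) $ k = (\<Sum>j<m. A $$ (k,j) * v $ j)"
  using assms by (simp add: scalar_prod_def row_def lessThan_atLeast0)

lemma hurwitz_decay:
  fixes M :: "complex mat" and w :: "real \<Rightarrow> complex vec"
  assumes M: "M \<in> carrier_mat n n"
  and eig: "\<And>e. eigenvalue M e \<Longrightarrow> Re e < 0"
  and dim: "\<And>t. t \<ge> t0 \<Longrightarrow> dim_vec (w t) = n"
  and der: "\<And>t i. t \<ge> t0 \<Longrightarrow> i < n \<Longrightarrow> ((\<lambda>s. w s $ i) has_vector_derivative (M *\<^sub>v w t) $ i) (at t within {t0..})"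
  and i: "i < n"
  shows "((\<lambda>t. w t $ i) \<longlongrightarrow> 0) at_top"
proof -
  obtain es where cp: "char_poly M = (\<Prod>a\<leftarrow>es. [:- a, 1:])"
    using char_poly_factorized[OF M] by blast
  obtain B P Q where sd: "schur_decomposition M es = (B,P,Q)" by (metis prod_cases3)
  from schur_decomposition[OF M cp sd] have sim: "similar_mat_wit M B P Q"
    and ut: "upper_triangular B" and dg: "diag_mat B = es" by auto
  from sim M have carr: "B \<in> carrier_mat n n" "P \<in> carrier_mat n n" "Q \<in> carrier_mat n n"
    and PQ: "P * Q = 1\<^sub>m n" and QP: "Q * P = 1\<^sub>m n" and MPBQ: "M = P * B * Q"
    unfolding similar_mat_wit_def Let_def by auto
  have Bdiag: "Re (B $$ (k,k)) < 0" if "k < n" for k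
  proof -
    have "B $$ (k,k) \<in> set es" unfolding dg[symmetric] diag_mat_def using that carr by auto
    then show ?thesis using eig diag_eigen[OF M cp] by blast
  qed
  have Btri: "B $$ (k,j) = 0" if "k < n" "j < k" for k j
    using ut that carr unfolding upper_triangular_def by auto
  have QM: "Q * M = B * Q"
  proof -
    have "Q * M = Q * ((P * B) * Q)" using MPBQ by simp
    also have "\<dots> = (Q * (P * B)) * Q"
      by (rule assoc_mult_mat[symmetric, of _ n n _ n _ n]) (use carr in auto)
    also have "Q * (P * B) = (Q * P) * B"
      by (rule assoc_mult_mat[symmetric, of _ n n _ n _ n]) (use carr in auto)
    also have "(Q * P) * B = B" unfolding QP using carr by simp
    finally show ?thesis .
  qed
  define y where "y k t = (\<Sum>j<n. Q $$ (k,j) * w t $ j)" for k t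
  have yQ: "y k t = (Q *\<^sub>v w t) $ k" if "t \<ge> t0" "k < n" for k t
    unfolding y_def by (rule mv_sum[OF carr(3) carrier_vecI[OF dim[OF that(1)]] that(2), symmetric])
  have yder: "(y k has_vector_derivative (\<Sum>j<n. B $$ (k,j) * y j t)) (at t within {t0..})"
    if "t \<ge> t0" "k < n" for k t
  proof -
    have wt: "w t \<in> carrier_vec n" by (rule carrier_vecI[OF dim[OF that(1)]])
    have "(y k has_vector_derivative (\<Sum>j<n. Q $$ (k,j) * (M *\<^sub>v w t) $ j)) (at t within {t0..})"
      unfolding y_def
    proof (rule has_vector_derivative_sum)
      fix j assume "j \<in> {..<n}"
      then show "((\<lambda>s. Q $$ (k,j) * w s $ j) has_vector_derivative Q $$ (k,j) * (M *\<^sub>v w t) $ j) (at t within {t0..})"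
        by (intro has_vector_derivative_mult_right der) (use that in auto)
    qed
    moreover have "(\<Sum>j<n. Q $$ (k,j) * (M *\<^sub>v w t) $ j) = (\<Sum>j<n. B $$ (k,j) * y j t)"
    proof -
      have Mw: "M *\<^sub>v w t \<in> carrier_vec n" using M wt by simp
      have Qw: "Q *\<^sub>v w t \<in> carrier_vec n" using carr wt by simp
      have "(\<Sum>j<n. Q $$ (k,j) * (M *\<^sub>v w t) $ j) = (Q *\<^sub>v (M *\<^sub>v w t)) $ k"
        using mv_sum[OF carr(3) Mw that(2)] by (rule sym)
      also have "\<dots> = ((Q * M) *\<^sub>v w t) $ k"
        by (simp only: assoc_mult_mat_vec[OF carr(3) M wt])
      also have "\<dots> = (B *\<^sub>v (Q *\<^sub>v w t)) $ k" unfolding QM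
        by (simp only: assoc_mult_mat_vec[OF carr(1) carr(3) wt])
      also have "\<dots> = (\<Sum>j<n. B $$ (k,j) * (Q *\<^sub>v w t) $ j)"
        by (rule mv_sum[OF carr(1) Qw that(2)])
      also have "\<dots> = (\<Sum>j<n. B $$ (k,j) * y j t)"
        by (rule sum.cong) (use yQ that in auto)
      finally show ?thesis .
    qed
    ultimately show ?thesis by simp
  qed
  have ylim: "(y k \<longlongrightarrow> 0) at_top" if "k < n" for k
    using that
  proof (induct "n - k" arbitrary: k rule: less_induct)
    case (less k)
    define h where "h t = (\<Sum>j\<in>{k<..<n}. B $$ (k,j) * y j t)" for t
    have hlim: "(h \<longlongrightarrow> 0) at_top"
    proof -
      have "((\<lambda>t. \<Sum>j\<in>{k<..<n}. B $$ (k,j) * y j t) \<longlongrightarrow> (\<Sum>j\<in>{k<..<n}. B $$ (k,j) * 0)) at_top"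
        by (intro tendsto_sum tendsto_mult less(1) tendsto_const) auto
      then show ?thesis unfolding h_def by simp
    qed
    have split: "(\<Sum>j<n. B $$ (k,j) * y j t) = B $$ (k,k) * y k t + h t" for t
    proof -
      have eq: "{..<n} = insert k ({..<k} \<union> {k<..<n})" using less by auto
      have "(\<Sum>j<n. B $$ (k,j) * y j t) = B $$ (k,k) * y k t + (\<Sum>j\<in>{..<k} \<union> {k<..<n}. B $$ (k,j) * y j t)"
        unfolding eq by (subst sum.insert) auto
      also have "(\<Sum>j\<in>{..<k} \<union> {k<..<n}. B $$ (k,j) * y j t) = (\<Sum>j<k. B $$ (k,j) * y j t) + h t"
        unfolding h_def by (rule sum.union_disjoint) auto
      finally have "(\<Sum>j<n. B $$ (k,j) * y j t) = (\<Sum>j<k. B $$ (k,j) * y j t) + B $$ (k,k) * y k t + h t"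
        by simp
      moreover have "(\<Sum>j\<in>{..<k}. B $$ (k,j) * y j t) = 0" using Btri less by simp
      ultimately show ?thesis by simp
    qed
    show ?case
      by (rule scalar_decay[of t0 "y k" "B $$ (k,k)" h])
         (use yder[OF _ less(2)] split Bdiag[OF less(2)] hlim in auto)
  qed
  have "((\<lambda>t. \<Sum>k<n. P $$ (i,k) * y k t) \<longlongrightarrow> (\<Sum>k<n. P $$ (i,k) * 0)) at_top"
    by (intro tendsto_sum tendsto_mult ylim tendsto_const) auto
  then have L: "((\<lambda>t. \<Sum>k<n. P $$ (i,k) * y k t) \<longlongrightarrow> 0) at_top" by simp
  have "\<forall>\<^sub>F t in at_top. (\<Sum>k<n. P $$ (i,k) * y k t) = w t $ i"
    unfolding eventually_at_top_linorder
  proof (intro exI[of _ t0] allI impI)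
    fix t assume t: "t \<ge> t0"
    have wt: "w t \<in> carrier_vec n" by (rule carrier_vecI[OF dim[OF t]])
    have Qw: "Q *\<^sub>v w t \<in> carrier_vec n" using carr wt by simp
    have "(\<Sum>k<n. P $$ (i,k) * y k t) = (\<Sum>k<n. P $$ (i,k) * (Q *\<^sub>v w t) $ k)"
      by (rule sum.cong) (use yQ t in auto)
    also have "\<dots> = (P *\<^sub>v (Q *\<^sub>v w t)) $ i"
      using mv_sum[OF carr(2) Qw i] by (rule sym)
    also have "\<dots> = ((P * Q) *\<^sub>v w t) $ i"
      by (simp only: assoc_mult_mat_vec[OF carr(2) carr(3) wt])
    also have "\<dots> = w t $ i" unfolding PQ using wt i by simp
    finally show "(\<Sum>k<n. P $$ (i,k) * y k t) = w t $ i" .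
  qed
  from tendsto_cong[OF this] L show ?thesis by simp
qed


lemma quad_root:
  fixes l :: complex and mu f g :: real
  assumes mu: "mu > 0" and f: "f < 0" and g: "g < 0"
  and eq: "l^2 = of_real mu * (of_real f + of_real g * l)"
  shows "Re l < 0"
proof -
  obtain a b where l: "l = Complex a b" by (cases l)
  from eq have re: "a*a - b*b = mu * f + mu * g * a" and im: "2*a*b = mu * g * b"
    unfolding l by (simp_all add: complex_eq_iff power2_eq_square algebra_simps)
  show ?thesis
  proof (cases "b = 0")
    case True
    with re have "a*a - mu * g * a - mu * f = 0" by simp
    moreover have "a*a - mu * g * a - mu * f > 0" if "a \<ge> 0"
    proof -
      have "a * a \<ge> 0" by simp
      moreover have "- mu * g * a \<ge> 0"
      proof -
        have "mu * g < 0" using mu g by (simp add: mult_pos_neg)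
        then have "mu * g * a \<le> 0" using that by (simp add: mult_nonpos_nonneg)
        then show ?thesis by simp
      qed
      moreover have "- mu * f > 0" using mu f by (simp add: mult_pos_neg)
      ultimately show ?thesis by linarith
    qed
    ultimately show ?thesis unfolding l by force
  next
    case False
    with im have "2 * a = mu * g" by simp
    moreover have "mu * g < 0" using mu g by (simp add: mult_pos_neg)
    ultimately show ?thesis unfolding l by simp
  qed
qed

lemma rows_mu:
  fixes x :: "nat \<Rightarrow> complex" and l c :: complex and \<rho> :: real and n :: nat
  assumes r0: "0 \<le> \<rho>" and r1: "\<rho> < 1"
  and nz: "\<exists>k\<le>Suc n. x k \<noteq> 0"
  and h0: "l^2 * x 0 = c * (x 0 - of_real \<rho> * x 1)"
  and hm: "\<And>k. k < n \<Longrightarrow> l^2 * x (Suc k) = c * (x (Suc k) - of_real \<rho> * x (Suc (Suc k)) - of_real (1-\<rho>) * x k)"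
  and hl: "l^2 * x (Suc n) = c * (x (Suc n) - x n)"
  shows "\<exists>mu>0. l^2 = of_real mu * c"
proof (cases "\<rho> = 0")
  case True
  show ?thesis
  proof (intro exI[of _ 1] conjI)
    show "l^2 = complex_of_real 1 * c"
    proof (rule ccontr)
      assume ne: "l^2 \<noteq> complex_of_real 1 * c"
      have "x k = 0" if "k \<le> Suc n" for k
        using that
      proof (induct k)
        case 0
        then show ?case using h0 True ne by (simp add: mult_cancel_right)
      next
        case (Suc k)
        then have xk: "x k = 0" by simp
        show ?case
        proof (cases "k < n")
          case True
          then show ?thesis using hm[OF True] xk \<open>\<rho> = 0\<close> ne by (simp add: mult_cancel_right)
        next
          case False
          then have "k = n" using Suc by simp
          then show ?thesis using hl xk ne by (simp add: mult_cancel_right)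
        qed
      qed
      then show False using nz by blast
    qed
  qed simp
next
  case False
  then have rp: "\<rho> > 0" using r0 by simp
  define d where "d k = \<rho>^k * (1-\<rho>)^(n-k)" for k
  define e where "e k = \<rho> * d k" for k
  have dpos: "d k > 0" for k unfolding d_def using rp r1 by simp
  have epos: "e k > 0" for k unfolding e_def using rp dpos by simp
  have dnn: "d k \<ge> 0" for k using dpos[of k] by simp
  have enn: "e k \<ge> 0" for k using epos[of k] by simp
  have R1: "(1-\<rho>) * d (Suc k) = e k" if "k < n" for k
  proof -
    have "n - k = Suc (n - Suc k)" using that by simp
    then show ?thesis unfolding d_def e_def by (simp add: algebra_simps)
  qed
  have R2: "d (Suc n) = e n" unfolding d_def e_def by simp
  define D where "D k = complex_of_real (d k)" for k
  define E where "E k = complex_of_real (e k)" for k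
  define A where "A k = cnj (x k) * x k" for k
  define C where "C k = cnj (x k) * x (Suc k)" for k
  define C' where "C' k = cnj (x (Suc k)) * x k" for k
  define T where "T k = D (Suc k) * A (Suc k) - E (Suc k) * C (Suc k) - E k * C' k" for k
  define Ed where "Ed j = E j * (A j + A (Suc j) - C j - C' j)" for j
  have DE: "D (Suc k) = E k + E (Suc k)" if "k < n" for k
  proof -
    have "d (Suc k) = e k + e (Suc k)" using R1[OF that] unfolding e_def by (simp add: algebra_simps)
    then show ?thesis unfolding D_def E_def by simp
  qed
  have tele: "(\<Sum>k<m. T k) = (\<Sum>j<m. Ed j) + E m * (A m - C m) - E 0 * (A 0 - C 0)" if "m \<le> n" for m
    using that
  proof (induct m)
    case 0
    then show ?case by simp
  next
    case (Suc m)
    then have IH: "(\<Sum>k<m. T k) = (\<Sum>j<m. Ed j) + E m * (A m - C m) - E 0 * (A 0 - C 0)" by simp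
    have "T m = D (Suc m) * A (Suc m) - E (Suc m) * C (Suc m) - E m * C' m" unfolding T_def ..
    also have "\<dots> = Ed m + E (Suc m) * (A (Suc m) - C (Suc m)) - E m * (A m - C m)"
    proof -
      have mn: "m < n" using Suc(2) by simp
      show ?thesis unfolding Ed_def DE[OF mn] by (simp add: algebra_simps)
    qed
    finally show ?case using IH by simp
  qed
  have R1c: "complex_of_real (1-\<rho>) * D (Suc k) = E k" if "k < n" for k
    unfolding D_def E_def using R1[OF that] by (metis of_real_mult)
  have ED: "complex_of_real \<rho> * D k = E k" for k unfolding D_def E_def e_def by simp
  have R2c: "D (Suc n) = E n" unfolding D_def E_def R2 ..
  have row0: "l^2 * (D 0 * A 0) = c * (D 0 * A 0 - E 0 * C 0)"
  proof -
    have "l^2 * (D 0 * A 0) = D 0 * cnj (x 0) * (l^2 * x 0)" by (simp add: A_def algebra_simps)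
    also have "\<dots> = D 0 * cnj (x 0) * (c * (x 0 - of_real \<rho> * x 1))" by (simp only: h0)
    also have "\<dots> = c * (D 0 * A 0 - (of_real \<rho> * D 0) * C 0)" by (simp add: A_def C_def algebra_simps)
    finally show ?thesis unfolding ED .
  qed
  have rowm: "l^2 * (D (Suc k) * A (Suc k)) = c * T k" if "k < n" for k
  proof -
    have "l^2 * (D (Suc k) * A (Suc k)) = D (Suc k) * cnj (x (Suc k)) * (l^2 * x (Suc k))" by (simp add: A_def algebra_simps)
    also have "\<dots> = D (Suc k) * cnj (x (Suc k)) * (c * (x (Suc k) - of_real \<rho> * x (Suc (Suc k)) - of_real (1-\<rho>) * x k))"
      by (simp only: hm[OF that])
    also have "\<dots> = c * (D (Suc k) * A (Suc k) - (of_real \<rho> * D (Suc k)) * C (Suc k) - (of_real (1-\<rho>) * D (Suc k)) * C' k)"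
      by (simp add: A_def C_def C'_def algebra_simps)
    finally show ?thesis unfolding ED R1c[OF that] T_def .
  qed
  have rowl: "l^2 * (D (Suc n) * A (Suc n)) = c * (E n * A (Suc n) - E n * C' n)"
  proof -
    have "l^2 * (D (Suc n) * A (Suc n)) = D (Suc n) * cnj (x (Suc n)) * (l^2 * x (Suc n))" by (simp add: A_def algebra_simps)
    also have "\<dots> = D (Suc n) * cnj (x (Suc n)) * (c * (x (Suc n) - x n))" by (simp only: hl)
    also have "\<dots> = c * (D (Suc n) * A (Suc n) - D (Suc n) * C' n)" by (simp add: A_def C'_def algebra_simps)
    finally show ?thesis unfolding R2c .
  qed
  define sw where "sw = D 0 * A 0 + (\<Sum>k<n. D (Suc k) * A (Suc k)) + D (Suc n) * A (Suc n)"
  define S where "S = (D 0 * A 0 - E 0 * C 0) + (\<Sum>k<n. T k) + (E n * A (Suc n) - E n * C' n)"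
  have lsw: "l^2 * sw = c * S"
  proof -
    have "l^2 * (\<Sum>k<n. D (Suc k) * A (Suc k)) = (\<Sum>k<n. c * T k)"
      unfolding sum_distrib_left by (rule sum.cong) (auto simp: rowm)
    then show ?thesis unfolding sw_def S_def using row0 rowl
      by (simp add: distrib_left sum_distrib_left)
  qed
  have An: "A k = complex_of_real ((cmod (x k))^2)" for k
    unfolding A_def complex_norm_square by simp
  have Edn: "Ed j = complex_of_real (e j * (cmod (x j - x (Suc j)))^2)" for j
  proof -
    have "complex_of_real (e j * (cmod (x j - x (Suc j)))^2) = E j * ((x j - x (Suc j)) * cnj (x j - x (Suc j)))"
      unfolding E_def of_real_mult complex_norm_square ..
    then show ?thesis by (simp add: Ed_def A_def C_def C'_def algebra_simps)
  qed
  define qr where "qr = (1-\<rho>) * d 0 * (cmod (x 0))^2 + (\<Sum>j<Suc n. e j * (cmod (x j - x (Suc j)))^2)"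
  define sr where "sr = d 0 * (cmod (x 0))^2 + (\<Sum>k<n. d (Suc k) * (cmod (x (Suc k)))^2) + d (Suc n) * (cmod (x (Suc n)))^2"
  have Sq: "S = complex_of_real qr"
  proof -
    have "S = (D 0 - E 0) * A 0 + (\<Sum>j<n. Ed j) + Ed n"
      unfolding S_def tele[OF order_refl] Ed_def by (simp add: algebra_simps)
    also have "\<dots> = (D 0 - E 0) * A 0 + (\<Sum>j<Suc n. Ed j)" by simp
    also have "\<dots> = complex_of_real qr"
      unfolding qr_def Edn An D_def E_def e_def by (simp add: algebra_simps)
    finally show ?thesis .
  qed
  have swr: "sw = complex_of_real sr"
    unfolding sw_def sr_def An D_def by simp
  have srpos: "sr > 0"
  proof -
    obtain k where k: "k \<le> Suc n" "x k \<noteq> 0" using nz by blast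
    have t1: "d 0 * (cmod (x 0))^2 \<ge> 0" by (simp add: dnn)
    have t3: "d (Suc n) * (cmod (x (Suc n)))^2 \<ge> 0" by (simp add: dnn)
    have t2: "(\<Sum>k<n. d (Suc k) * (cmod (x (Suc k)))^2) \<ge> 0"
      by (rule sum_nonneg) (simp add: dnn)
    show ?thesis
    proof (cases "k = 0")
      case True
      then have "d 0 * (cmod (x 0))^2 > 0" using k dpos[of 0] by simp
      then show ?thesis unfolding sr_def using t2 t3 by linarith
    next
      case False
      then obtain j where j: "k = Suc j" by (cases k) auto
      show ?thesis
      proof (cases "j = n")
        case True
        then have "d (Suc n) * (cmod (x (Suc n)))^2 > 0" using k j dpos[of "Suc n"] by simp
        then show ?thesis unfolding sr_def using t1 t2 by linarith
      next
        case False
        then have jn: "j < n" using k j by simp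
        have "d (Suc j) * (cmod (x (Suc j)))^2 > 0" using k j dpos[of "Suc j"] by simp
        also have "d (Suc j) * (cmod (x (Suc j)))^2 \<le> (\<Sum>k<n. d (Suc k) * (cmod (x (Suc k)))^2)"
          by (rule member_le_sum[where f="\<lambda>k. d (Suc k) * (cmod (x (Suc k)))^2"]) (use jn in \<open>auto simp: dnn\<close>)
        finally show ?thesis unfolding sr_def using t1 t3 by linarith
      qed
    qed
  qed
  have qrpos: "qr > 0"
  proof -
    have q1: "(1-\<rho>) * d 0 * (cmod (x 0))^2 \<ge> 0" using r1 by (simp add: dnn)
    have q2: "(\<Sum>j<Suc n. e j * (cmod (x j - x (Suc j)))^2) \<ge> 0"
      by (rule sum_nonneg) (simp add: enn)
    show ?thesis
    proof (rule ccontr)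
      assume "\<not> qr > 0"
      then have "qr = 0" using q1 q2 unfolding qr_def by linarith
      then have z1: "(1-\<rho>) * d 0 * (cmod (x 0))^2 = 0" and
        z2: "(\<Sum>j<Suc n. e j * (cmod (x j - x (Suc j)))^2) = 0"
        using q1 q2 unfolding qr_def by linarith+
      from z1 have x0: "x 0 = 0" using dpos[of 0] r1 by simp
      from z2 have zz: "\<forall>j\<in>{..<Suc n}. e j * (cmod (x j - x (Suc j)))^2 = 0"
        by (subst (asm) sum_nonneg_eq_0_iff) (auto simp: enn)
      then have xs: "x (Suc j) = x j" if "j \<le> n" for j
      proof -
        have "e j * (cmod (x j - x (Suc j)))^2 = 0" using zz that by simp
        then have "x j - x (Suc j) = 0" using epos[of j] by simp
        then show ?thesis by simp
      qed
      have "x k = 0" if "k \<le> Suc n" for k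
        using that by (induct k) (use x0 xs in auto)
      then show False using nz by blast
    qed
  qed
  have "l^2 * complex_of_real sr = c * complex_of_real qr" using lsw unfolding swr Sq .
  then have "l^2 = complex_of_real (qr / sr) * c"
    using srpos by (simp add: field_simps)
  then show ?thesis using qrpos srpos by (intro exI[of _ "qr / sr"]) simp
qed



lemma Amat_dims[simp]: "dim_row Amat = 2" "dim_col Amat = 2"
  by (simp_all add: Amat_def mat_of_rows_list_def)
lemma Kmat_dims[simp]: "dim_row (Kmat f g) = 2" "dim_col (Kmat f g) = 2"
  by (simp_all add: Kmat_def mat_of_rows_list_def)
lemma Pmat_dims[simp]: "dim_row (Pmat N \<rho>) = N" "dim_col (Pmat N \<rho>) = N"
  by (simp_all add: Pmat_def Qmat_def)
lemma kron_dims[simp]: "dim_row (kron X Y) = dim_row X * dim_row Y" "dim_col (kron X Y) = dim_col X * dim_col Y"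
  by (simp_all add: kron_def)
lemma kron_idx: "i < dim_row X * dim_row Y \<Longrightarrow> j < dim_col X * dim_col Y \<Longrightarrow>
  kron X Y $$ (i,j) = X $$ (i div dim_row Y, j div dim_col Y) * Y $$ (i mod dim_row Y, j mod dim_col Y)"
  by (simp add: kron_def)

lemma Amat_idx: assumes "a < 2" "b < 2" shows "Amat $$ (a,b) = (if a = 0 \<and> b = 1 then 1 else 0)"
proof -
  have "a = 0 \<or> a = 1" "b = 0 \<or> b = 1" using assms by arith+
  then show ?thesis by (elim disjE) (simp_all add: Amat_def mat_of_rows_list_def)
qed
lemma Kmat_idx: assumes "a < 2" "b < 2" shows "Kmat f g $$ (a,b) = (if a = 1 then (if b = 0 then f else g) else 0)"
proof -
  have "a = 0 \<or> a = 1" "b = 0 \<or> b = 1" using assms by arith+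
  then show ?thesis by (elim disjE) (simp_all add: Kmat_def mat_of_rows_list_def)
qed

lemma Mmat_dims: "dim_row (Mmat N \<rho> f g) = 2*N" "dim_col (Mmat N \<rho> f g) = 2*N"
  unfolding Mmat_def index_add_mat(2,3) kron_dims Pmat_dims Kmat_dims by simp_all

lemma Mmat_carrier: "Mmat N \<rho> f g \<in> carrier_mat (2*N) (2*N)"
  by (rule carrier_matI) (rule Mmat_dims)+

lemma Mmat_idx: assumes "i < 2*N" "j < 2*N"
  shows "Mmat N \<rho> f g $$ (i,j) = (if i div 2 = j div 2 then 1 else 0) * Amat $$ (i mod 2, j mod 2)
     + Pmat N \<rho> $$ (i div 2, j div 2) * Kmat f g $$ (i mod 2, j mod 2)"
proof -
  have "i div 2 < N" "j div 2 < N" using assms by auto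
  then show ?thesis using assms unfolding Mmat_def
    by (simp add: kron_idx mult.commute)
qed

lemma sum_pairs: "(\<Sum>j<2*(N::nat). h j) = (\<Sum>m<N. h (2*m) + h (2*m+1))"
  by (induct N) (simp_all add: algebra_simps)

lemma Mv_even: assumes v: "v \<in> carrier_vec (2*N)" and k: "k < N"
  shows "(Mmat N \<rho> f g *\<^sub>v v) $ (2*k) = v $ (2*k+1)"
proof -
  have "(Mmat N \<rho> f g *\<^sub>v v) $ (2*k) = (\<Sum>j<2*N. Mmat N \<rho> f g $$ (2*k, j) * v $ j)"
    by (rule mv_sum[OF Mmat_carrier v]) (use k in simp)
  also have "\<dots> = (\<Sum>m<N. Mmat N \<rho> f g $$ (2*k, 2*m) * v $ (2*m) + Mmat N \<rho> f g $$ (2*k, 2*m+1) * v $ (2*m+1))"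
    by (rule sum_pairs)
  also have "\<dots> = (\<Sum>m<N. if k = m then v $ (2*m+1) else 0)"
  proof (rule sum.cong)
    fix m assume m: "m \<in> {..<N}"
    have e: "(2*m+1) div 2 = m" "(2*m+1) mod 2 = 1" by presburger+
    show "Mmat N \<rho> f g $$ (2*k, 2*m) * v $ (2*m) + Mmat N \<rho> f g $$ (2*k, 2*m+1) * v $ (2*m+1)
      = (if k = m then v $ (2*m+1) else 0)"
      using m k by (simp add: Mmat_idx e Amat_idx Kmat_idx)
  qed simp
  also have "\<dots> = v $ (2*k+1)" using k by simp
  finally show ?thesis .
qed

lemma Mv_odd: assumes v: "v \<in> carrier_vec (2*N)" and k: "k < N"
  shows "(Mmat N \<rho> f g *\<^sub>v v) $ (2*k+1) = (\<Sum>m<N. Pmat N \<rho> $$ (k,m) * (f * v $ (2*m) + g * v $ (2*m+1)))"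
proof -
  have "(Mmat N \<rho> f g *\<^sub>v v) $ (2*k+1) = (\<Sum>j<2*N. Mmat N \<rho> f g $$ (2*k+1, j) * v $ j)"
    by (rule mv_sum[OF Mmat_carrier v]) (use k in simp)
  also have "\<dots> = (\<Sum>m<N. Mmat N \<rho> f g $$ (2*k+1, 2*m) * v $ (2*m) + Mmat N \<rho> f g $$ (2*k+1, 2*m+1) * v $ (2*m+1))"
    by (rule sum_pairs)
  also have "\<dots> = (\<Sum>m<N. Pmat N \<rho> $$ (k,m) * (f * v $ (2*m) + g * v $ (2*m+1)))"
  proof (rule sum.cong)
    fix m assume m: "m \<in> {..<N}"
    have e: "(2*m+1) div 2 = m" "(2*m+1) mod 2 = 1" "(2*k+1) div 2 = k" "(2*k+1) mod 2 = 1" by presburger+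
    have l: "2*k+1 < 2*N" "2*m < 2*N" "2*m+1 < 2*N" using m k by auto
    show "Mmat N \<rho> f g $$ (2*k+1, 2*m) * v $ (2*m) + Mmat N \<rho> f g $$ (2*k+1, 2*m+1) * v $ (2*m+1)
      = Pmat N \<rho> $$ (k,m) * (f * v $ (2*m) + g * v $ (2*m+1))"
      unfolding Mmat_idx[OF l(1) l(2)] Mmat_idx[OF l(1) l(3)] e by (simp add: Amat_idx Kmat_idx algebra_simps)
  qed simp
  finally show ?thesis .
qed

lemma Pmat_idx: assumes "k < N" "m < N"
  shows "Pmat N \<rho> $$ (k,m) = (if k = m then 1 else 0) -
    (if k+1 < N \<and> m = k+1 then complex_of_real \<rho> else if 1 \<le> k \<and> k+1 < N \<and> m+1 = k then complex_of_real (1 - \<rho>)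
     else if k+1 = N \<and> m+2 = N then 1 else 0)"
  using assms unfolding Pmat_def by (simp add: Qmat_def)

lemma P0: "(\<Sum>m<Suc (Suc n). Pmat (Suc (Suc n)) \<rho> $$ (0,m) * x m) = x 0 - complex_of_real \<rho> * x 1"
proof -
  have "(\<Sum>m<Suc (Suc n). Pmat (Suc (Suc n)) \<rho> $$ (0,m) * x m) =
    (\<Sum>m<Suc (Suc n). (if m = 0 then x 0 else 0) - (if m = 1 then complex_of_real \<rho> * x 1 else 0))"
    by (rule sum.cong) (auto simp: Pmat_idx)
  also have "\<dots> = x 0 - complex_of_real \<rho> * x 1" by (simp add: sum_subtractf)
  finally show ?thesis .
qed

lemma Pm: assumes j: "j < n"
  shows "(\<Sum>m<Suc (Suc n). Pmat (Suc (Suc n)) \<rho> $$ (Suc j,m) * x m) =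
    x (Suc j) - complex_of_real \<rho> * x (Suc (Suc j)) - complex_of_real (1 - \<rho>) * x j"
proof -
  have "(\<Sum>m<Suc (Suc n). Pmat (Suc (Suc n)) \<rho> $$ (Suc j,m) * x m) =
    (\<Sum>m<Suc (Suc n). (if m = Suc j then x (Suc j) else 0) - (if m = Suc (Suc j) then complex_of_real \<rho> * x (Suc (Suc j)) else 0)
       - (if m = j then complex_of_real (1 - \<rho>) * x j else 0))"
    by (rule sum.cong) (use j in \<open>auto simp: Pmat_idx algebra_simps\<close>)
  also have "\<dots> = x (Suc j) - complex_of_real \<rho> * x (Suc (Suc j)) - complex_of_real (1 - \<rho>) * x j"
    using j by (simp add: sum_subtractf algebra_simps)
  finally show ?thesis .
qed

lemma Pl: "(\<Sum>m<Suc (Suc n). Pmat (Suc (Suc n)) \<rho> $$ (Suc n,m) * x m) = x (Suc n) - x n"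
proof -
  have "(\<Sum>m<Suc (Suc n). Pmat (Suc (Suc n)) \<rho> $$ (Suc n,m) * x m) =
    (\<Sum>m<Suc (Suc n). (if m = Suc n then x (Suc n) else 0) - (if m = n then x n else 0))"
    by (rule sum.cong) (auto simp: Pmat_idx)
  also have "\<dots> = x (Suc n) - x n" by (simp add: sum_subtractf)
  finally show ?thesis .
qed

lemma M_eig_neg:
  fixes \<rho> f g :: real
  assumes N: "N \<ge> 2" and r0: "0 \<le> \<rho>" and r1: "\<rho> < 1" and f: "f < 0" and g: "g < 0"
  and ev: "eigenvalue (Mmat N \<rho> (complex_of_real f) (complex_of_real g)) l"
  shows "Re l < 0"
proof -
  let ?M = "Mmat N \<rho> (complex_of_real f) (complex_of_real g)"
  from ev obtain v where v: "v \<in> carrier_vec (2*N)" and v0: "v \<noteq> 0\<^sub>v (2*N)" and Mv: "?M *\<^sub>v v = l \<cdot>\<^sub>v v"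
    unfolding eigenvalue_def eigenvector_def by (auto simp: Mmat_dims)
  obtain n where Nn: "N = Suc (Suc n)" using N by (metis add_2_eq_Suc le_Suc_ex)
  define x where "x k = v $ (2*k)" for k
  define c where "c = complex_of_real f + complex_of_real g * l"
  have odd: "v $ (2*k+1) = l * x k" if "k < N" for k
  proof -
    have "v $ (2*k+1) = (?M *\<^sub>v v) $ (2*k)" using Mv_even[OF v that] by simp
    also have "\<dots> = l * x k" unfolding Mv x_def using v that by simp
    finally show ?thesis .
  qed
  have row: "l^2 * x k = c * (\<Sum>m<N. Pmat N \<rho> $$ (k,m) * x m)" if "k < N" for k
  proof -
    have "l^2 * x k = l * v $ (2*k+1)" using odd[OF that] by (simp add: power2_eq_square)
    also have "\<dots> = (?M *\<^sub>v v) $ (2*k+1)" unfolding Mv using v that by simp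
    also have "\<dots> = (\<Sum>m<N. Pmat N \<rho> $$ (k,m) * (complex_of_real f * v $ (2*m) + complex_of_real g * v $ (2*m+1)))"
      by (rule Mv_odd[OF v that])
    also have "\<dots> = (\<Sum>m<N. c * (Pmat N \<rho> $$ (k,m) * x m))"
    proof (rule sum.cong)
      fix m assume "m \<in> {..<N}"
      then have o: "v $ (2*m+1) = l * x m" using odd by simp
      show "Pmat N \<rho> $$ (k,m) * (complex_of_real f * v $ (2*m) + complex_of_real g * v $ (2*m+1)) = c * (Pmat N \<rho> $$ (k,m) * x m)"
        unfolding o by (simp add: x_def c_def algebra_simps)
    qed simp
    also have "\<dots> = c * (\<Sum>m<N. Pmat N \<rho> $$ (k,m) * x m)" by (simp add: sum_distrib_left)
    finally show ?thesis .
  qed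
  have nz: "\<exists>k\<le>Suc n. x k \<noteq> 0"
  proof (rule ccontr)
    assume "\<not> ?thesis"
    then have xz: "x k = 0" if "k < N" for k using that Nn by auto
    have "v = 0\<^sub>v (2*N)"
    proof (rule eq_vecI)
      show "dim_vec v = dim_vec (0\<^sub>v (2*N))" using v by simp
      fix i assume "i < dim_vec (0\<^sub>v (2*N))"
      then have i: "i < 2*N" by simp
      then have k: "i div 2 < N" by simp
      show "v $ i = 0\<^sub>v (2*N) $ i"
      proof (cases "even i")
        case True
        then have "i = 2 * (i div 2)" by simp
        then show ?thesis using xz[OF k] i unfolding x_def by (metis index_zero_vec(1))
      next
        case False
        then have "i = 2 * (i div 2) + 1" by presburger
        then show ?thesis using odd[OF k] xz[OF k] i by (metis index_zero_vec(1) mult_zero_right)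
      qed
    qed
    then show False using v0 by simp
  qed
  have "\<exists>mu>0. l^2 = complex_of_real mu * c"
  proof (rule rows_mu[OF r0 r1 nz])
    show "l^2 * x 0 = c * (x 0 - complex_of_real \<rho> * x 1)"
      using row[of 0] Nn P0[of n \<rho> x] by simp
    show "l^2 * x (Suc k) = c * (x (Suc k) - complex_of_real \<rho> * x (Suc (Suc k)) - complex_of_real (1-\<rho>) * x k)"
      if "k < n" for k
      using row[of "Suc k"] Nn Pm[OF that, of \<rho> x] that by simp
    show "l^2 * x (Suc n) = c * (x (Suc n) - x n)"
      using row[of "Suc n"] Nn Pl[of n \<rho> x] by simp
  qed
  then obtain mu where mu: "mu > 0" "l^2 = complex_of_real mu * c" by blast
  show ?thesis by (rule quad_root[OF mu(1) f g]) (use mu(2) c_def in simp)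
qed



lemma avec_eq:
  fixes \<rho> f g :: real and \<nu> :: complex
  assumes N: "N \<ge> 2" and r0: "0 \<le> \<rho>" and r1: "\<rho> < 1" and f: "f < 0" and g: "g < 0" and nu: "Re \<nu> = 0"
  defines "M \<equiv> Mmat N \<rho> (complex_of_real f) (complex_of_real g)"
  and "a \<equiv> avec N \<rho> (complex_of_real f) (complex_of_real g) \<nu>"
  and "g0 \<equiv> g0vec N \<rho> (complex_of_real f) (complex_of_real g) \<nu>"
  shows "dim_vec a = 2*N" "\<And>i. i < 2*N \<Longrightarrow> (M *\<^sub>v a) $ i = \<nu> * a $ i - g0 $ i"
proof -
  have Mc: "M \<in> carrier_mat (2*N) (2*N)" unfolding M_def by (rule Mmat_carrier)
  define Mn where "Mn = M - \<nu> \<cdot>\<^sub>m 1\<^sub>m (2*N)"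
  have Mnc: "Mn \<in> carrier_mat (2*N) (2*N)" by (rule carrier_matI) (simp_all add: Mn_def)
  have noeig: "\<not> eigenvalue M \<nu>"
    using M_eig_neg[OF N r0 r1 f g, of \<nu>] nu unfolding M_def by auto
  have cm: "char_matrix M \<nu> = Mn"
  proof (rule eq_matI)
    show "dim_row (char_matrix M \<nu>) = dim_row Mn" "dim_col (char_matrix M \<nu>) = dim_col Mn"
      using carrier_matD[OF Mc] carrier_matD[OF Mnc] unfolding char_matrix_def by auto
    fix i j assume ij: "i < dim_row Mn" "j < dim_col Mn"
    then have "i < 2*N" "j < 2*N" using Mnc by auto
    then show "char_matrix M \<nu> $$ (i,j) = Mn $$ (i,j)"
      unfolding char_matrix_def Mn_def using carrier_matD[OF Mc] by simp
  qed
  have "det Mn \<noteq> 0" using noeig eigenvalue_det[OF Mc] cm by simp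
  then have U: "Mn \<in> Units (ring_mat TYPE(complex) (2*N) ())"
    by (rule det_non_zero_imp_unit[OF Mnc])
  have "mat_inverse Mn \<noteq> None"
  proof
    assume "mat_inverse Mn = None"
    from mat_inverse(1)[OF Mnc this, of "()"] U show False by simp
  qed
  then obtain B where MB: "mat_inverse Mn = Some B" by auto
  from mat_inverse(2)[OF Mnc MB] have MnB: "Mn * B = 1\<^sub>m (2*N)" and Bc: "B \<in> carrier_mat (2*N) (2*N)" by auto
  have g0c: "g0 \<in> carrier_vec (2*N)" by (rule carrier_vecI) (simp add: g0_def g0vec_def)
  have aB: "a = - (B *\<^sub>v g0)" unfolding a_def avec_def M_def[symmetric] g0_def[symmetric] Mn_def[symmetric] MB by simp
  show ad: "dim_vec a = 2*N" unfolding aB using Bc by simp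
  have ac: "a \<in> carrier_vec (2*N)" by (rule carrier_vecI[OF ad])
  fix i assume i: "i < 2*N"
  have "(Mn *\<^sub>v a) $ i = (\<Sum>j<2*N. Mn $$ (i,j) * a $ j)" by (rule mv_sum[OF Mnc ac i])
  also have "\<dots> = (\<Sum>j<2*N. M $$ (i,j) * a $ j - (if j = i then \<nu> * a $ i else 0))"
    by (rule sum.cong) (use i carrier_matD[OF Mc] in \<open>auto simp: Mn_def algebra_simps\<close>)
  also have "\<dots> = (\<Sum>j<2*N. M $$ (i,j) * a $ j) - \<nu> * a $ i" using i by (simp add: sum_subtractf)
  also have "(\<Sum>j<2*N. M $$ (i,j) * a $ j) = (M *\<^sub>v a) $ i" by (rule mv_sum[OF Mc ac i, symmetric])
  finally have e1: "(Mn *\<^sub>v a) $ i = (M *\<^sub>v a) $ i - \<nu> * a $ i" .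
  have Bg: "B *\<^sub>v g0 \<in> carrier_vec (2*N)" using Bc g0c by simp
  have "(Mn *\<^sub>v a) $ i = (\<Sum>j<2*N. Mn $$ (i,j) * a $ j)" by (rule mv_sum[OF Mnc ac i])
  also have "\<dots> = - (\<Sum>j<2*N. Mn $$ (i,j) * (B *\<^sub>v g0) $ j)"
    unfolding sum_negf[symmetric] by (rule sum.cong) (use Bc g0c in \<open>auto simp: aB\<close>)
  also have "(\<Sum>j<2*N. Mn $$ (i,j) * (B *\<^sub>v g0) $ j) = (Mn *\<^sub>v (B *\<^sub>v g0)) $ i"
    by (rule mv_sum[OF Mnc Bg i, symmetric])
  also have "\<dots> = ((Mn * B) *\<^sub>v g0) $ i" by (simp only: assoc_mult_mat_vec[OF Mnc Bc g0c])
  also have "\<dots> = g0 $ i" unfolding MnB using g0c by simp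
  finally have e2: "(Mn *\<^sub>v a) $ i = - g0 $ i" .
  from e1 e2 show "(M *\<^sub>v a) $ i = \<nu> * a $ i - g0 $ i" by (simp add: algebra_simps)
qed

theorem mainTheorem3:
  fixes N :: nat and \<rho> f g :: real and \<nu> :: complex
  assumes "N \<ge> 2" and "0 \<le> \<rho>" and "\<rho> < 1" and "f < 0" and "g < 0" and "Re \<nu> = 0"
  shows "\<not> eigenvalue (Mmat N \<rho> (complex_of_real f) (complex_of_real g)) \<nu>
    \<and> (\<forall>(z :: real \<Rightarrow> complex vec) (t0 :: real).
         (\<forall>t\<ge>t0. dim_vec (z t) = 2*N \<and>
            (\<forall>i<2*N. ((\<lambda>s. z s $ i) has_vector_derivative
               ((Mmat N \<rho> (complex_of_real f) (complex_of_real g) *\<^sub>v z t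
                 + exp (\<nu> * complex_of_real t) \<cdot>\<^sub>v g0vec N \<rho> (complex_of_real f) (complex_of_real g) \<nu>) $ i))
               (at t within {t0..})))
       \<longrightarrow> (\<forall>i<2*N. ((\<lambda>t. z t $ i - exp (\<nu> * complex_of_real t) * avec N \<rho> (complex_of_real f) (complex_of_real g) \<nu> $ i)
                        \<longlongrightarrow> 0) at_top)
         \<and> (\<forall>k\<in>{1..N}. ((\<lambda>t. z t $ (2*k-2) - exp (\<nu> * complex_of_real t) * avec N \<rho> (complex_of_real f) (complex_of_real g) \<nu> $ (2*k-2))
                        \<longlongrightarrow> 0) at_top))"
proof -
  note as = assms
  define M where "M = Mmat N \<rho> (complex_of_real f) (complex_of_real g)"
  define a where "a = avec N \<rho> (complex_of_real f) (complex_of_real g) \<nu>"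
  define g0 where "g0 = g0vec N \<rho> (complex_of_real f) (complex_of_real g) \<nu>"
  have Mc: "M \<in> carrier_mat (2*N) (2*N)" unfolding M_def by (rule Mmat_carrier)
  have ad: "dim_vec a = 2*N" and Ma: "\<And>i. i < 2*N \<Longrightarrow> (M *\<^sub>v a) $ i = \<nu> * a $ i - g0 $ i"
    using avec_eq[OF as] unfolding M_def a_def g0_def by auto
  have ac: "a \<in> carrier_vec (2*N)" by (rule carrier_vecI[OF ad])
  have g0d: "dim_vec g0 = 2*N" unfolding g0_def g0vec_def by simp
  have noeig: "\<not> eigenvalue M \<nu>"
    using M_eig_neg[OF as(1-5), of \<nu>] as(6) unfolding M_def by auto
  have conv: "((\<lambda>t. z t $ i - exp (\<nu> * complex_of_real t) * a $ i) \<longlongrightarrow> 0) at_top"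
    if hyp: "\<forall>t\<ge>t0. dim_vec (z t) = 2*N \<and>
            (\<forall>i<2*N. ((\<lambda>s. z s $ i) has_vector_derivative
               ((M *\<^sub>v z t + exp (\<nu> * complex_of_real t) \<cdot>\<^sub>v g0) $ i)) (at t within {t0..}))"
    and i: "i < 2*N" for z t0 i
  proof -
    define w where "w t = z t - exp (\<nu> * complex_of_real t) \<cdot>\<^sub>v a" for t
    have wi: "w t $ j = z t $ j - exp (\<nu> * complex_of_real t) * a $ j" if "j < 2*N" for t j
      unfolding w_def using that ad by simp
    have wd: "dim_vec (w t) = 2*N" for t unfolding w_def using ad by simp
    have wder: "((\<lambda>s. w s $ j) has_vector_derivative (M *\<^sub>v w t) $ j) (at t within {t0..})"
      if t: "t \<ge> t0" and j: "j < 2*N" for t j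
    proof -
      have zd: "dim_vec (z t) = 2*N" using hyp t by auto
      have zc: "z t \<in> carrier_vec (2*N)" by (rule carrier_vecI[OF zd])
      have dz: "((\<lambda>s. z s $ j) has_vector_derivative ((M *\<^sub>v z t + exp (\<nu> * complex_of_real t) \<cdot>\<^sub>v g0) $ j)) (at t within {t0..})"
        using hyp t j by auto
      have de: "((\<lambda>s. exp (\<nu> * complex_of_real s) * a $ j) has_vector_derivative (\<nu> * exp (\<nu> * complex_of_real t) * a $ j)) (at t within {t0..})"
        by (rule has_vector_derivative_real_field) (auto intro!: derivative_eq_intros)
      have "((\<lambda>s. z s $ j - exp (\<nu> * complex_of_real s) * a $ j) has_vector_derivative
          ((M *\<^sub>v z t + exp (\<nu> * complex_of_real t) \<cdot>\<^sub>v g0) $ j - \<nu> * exp (\<nu> * complex_of_real t) * a $ j)) (at t within {t0..})"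
        by (rule has_vector_derivative_diff[OF dz de])
      moreover have "(\<lambda>s. z s $ j - exp (\<nu> * complex_of_real s) * a $ j) = (\<lambda>s. w s $ j)"
        using wi j by auto
      moreover have "(M *\<^sub>v z t + exp (\<nu> * complex_of_real t) \<cdot>\<^sub>v g0) $ j - \<nu> * exp (\<nu> * complex_of_real t) * a $ j
          = (M *\<^sub>v w t) $ j"
      proof -
        have wc: "w t \<in> carrier_vec (2*N)" by (rule carrier_vecI[OF wd])
        have "(M *\<^sub>v w t) $ j = (\<Sum>k<2*N. M $$ (j,k) * w t $ k)" by (rule mv_sum[OF Mc wc j])
        also have "\<dots> = (\<Sum>k<2*N. M $$ (j,k) * z t $ k) - exp (\<nu> * complex_of_real t) * (\<Sum>k<2*N. M $$ (j,k) * a $ k)"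
          by (simp add: wi sum_subtractf sum_distrib_left algebra_simps)
        also have "(\<Sum>k<2*N. M $$ (j,k) * z t $ k) = (M *\<^sub>v z t) $ j" by (rule mv_sum[OF Mc zc j, symmetric])
        also have "(\<Sum>k<2*N. M $$ (j,k) * a $ k) = (M *\<^sub>v a) $ j" by (rule mv_sum[OF Mc ac j, symmetric])
        also have "(M *\<^sub>v a) $ j = \<nu> * a $ j - g0 $ j" by (rule Ma[OF j])
        finally have "(M *\<^sub>v w t) $ j = (M *\<^sub>v z t) $ j - exp (\<nu> * complex_of_real t) * (\<nu> * a $ j - g0 $ j)" .
        moreover have "(M *\<^sub>v z t + exp (\<nu> * complex_of_real t) \<cdot>\<^sub>v g0) $ j = (M *\<^sub>v z t) $ j + exp (\<nu> * complex_of_real t) * g0 $ j"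
          using j g0d Mc by simp
        ultimately show ?thesis by (simp add: algebra_simps)
      qed
      ultimately show ?thesis by simp
    qed
    have "((\<lambda>t. w t $ i) \<longlongrightarrow> 0) at_top"
    proof -
      have eigM: "\<And>e. eigenvalue M e \<Longrightarrow> Re e < 0" using M_eig_neg[OF as(1-5)] unfolding M_def by auto
      have wd': "\<And>t. t \<ge> t0 \<Longrightarrow> dim_vec (w t) = 2*N" using wd by simp
      show ?thesis by (rule hurwitz_decay[OF Mc eigM wd' wder i])
    qed
    moreover have "(\<lambda>t. w t $ i) = (\<lambda>t. z t $ i - exp (\<nu> * complex_of_real t) * a $ i)"
      using wi i by auto
    ultimately show ?thesis by simp
  qed
  show ?thesis
    unfolding M_def[symmetric] a_def[symmetric] g0_def[symmetric]
  proof (intro conjI allI impI ballI)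
    show "\<not> eigenvalue M \<nu>" by (rule noeig)
  next
    fix z t0 i assume "\<forall>t\<ge>t0. dim_vec (z t) = 2*N \<and> (\<forall>i<2*N. ((\<lambda>s. z s $ i) has_vector_derivative
               ((M *\<^sub>v z t + exp (\<nu> * complex_of_real t) \<cdot>\<^sub>v g0) $ i)) (at t within {t0..}))" "i < 2*N"
    then show "((\<lambda>t. z t $ i - exp (\<nu> * complex_of_real t) * a $ i) \<longlongrightarrow> 0) at_top" by (rule conv)
  next
    fix z t0 k assume h: "\<forall>t\<ge>t0. dim_vec (z t) = 2*N \<and> (\<forall>i<2*N. ((\<lambda>s. z s $ i) has_vector_derivative
               ((M *\<^sub>v z t + exp (\<nu> * complex_of_real t) \<cdot>\<^sub>v g0) $ i)) (at t within {t0..}))" and k: "k \<in> {1..N}"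
    have "2*k-2 < 2*N" using k by auto
    from conv[OF h this] show "((\<lambda>t. z t $ (2*k-2) - exp (\<nu> * complex_of_real t) * a $ (2*k-2)) \<longlongrightarrow> 0) at_top" .
  qed
qed


end
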